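(* Let $(X,x^* )$ be a pointed topological space and $n\geq 1$. Then $\pi_n^{top}(X,x^* )$ is a homogeneous space, i.e. for any two elements $a,b\in\pi_n^{top}(X,x^* )$ there is a homeomorphism of $\pi_n^{top}(X,x^* )$ onto itself sending $a$ to $b$.
   Context: $\pi_n^{top}(X,x^* )$ denotes the $n$-th homotopy group $\pi_n(X,x^* )$ endowed with the quotient topology induced by the map $\Omega^n(X,x^* )\to\pi_n(X,x^* )$, $f\mapsto[f]$, where $\Omega^n(X,x^* )$ is the space of maps $(I^n,\partial I^n)\to(X,x^* )$ with the compact-open topology. *)

theory Defs
  imports "HOL-Analysis.Analysis"
begin

text \<open>The standard n-cube I^n, as a subspace of functions nat to real (extensional outside {..<n}).\<close>
definition cube_top :: "nat \<Rightarrow> (nat \<Rightarrow> real) topology" where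
  "cube_top n = product_topology (\<lambda>i. top_of_set {0..1::real}) {..<n}"

definition cube_boundary :: "nat \<Rightarrow> (nat \<Rightarrow> real) set" where
  "cube_boundary n = {t \<in> topspace (cube_top n). \<exists>i<n. t i = 0 \<or> t i = 1}"

definition Omega_set :: "nat \<Rightarrow> 'a topology \<Rightarrow> 'a \<Rightarrow> ((nat \<Rightarrow> real) \<Rightarrow> 'a) set" where
  "Omega_set n X x0 = {f. continuous_map (cube_top n) X f \<and> (\<forall>t\<in>cube_boundary n. f t = x0)}"

definition compact_open_topology :: "'b topology \<Rightarrow> 'a topology \<Rightarrow> ('b \<Rightarrow> 'a) topology" where
  "compact_open_topology K X =
     topology_generated_by {{f. f ` C \<subseteq> U} | C U. compactin K C \<and> openin X U}"

definition Omega_top :: "nat \<Rightarrow> 'a topology \<Rightarrow> 'a \<Rightarrow> ((nat \<Rightarrow> real) \<Rightarrow> 'a) topology" where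
  "Omega_top n X x0 = subtopology (compact_open_topology (cube_top n) X) (Omega_set n X x0)"

definition rel_homotopic :: "nat \<Rightarrow> 'a topology \<Rightarrow> 'a \<Rightarrow> ((nat \<Rightarrow> real) \<Rightarrow> 'a) \<Rightarrow> ((nat \<Rightarrow> real) \<Rightarrow> 'a) \<Rightarrow> bool" where
  "rel_homotopic n X x0 f g =
     homotopic_with (\<lambda>h. \<forall>t\<in>cube_boundary n. h t = x0) (cube_top n) X f g"

definition htp_class :: "nat \<Rightarrow> 'a topology \<Rightarrow> 'a \<Rightarrow> ((nat \<Rightarrow> real) \<Rightarrow> 'a) \<Rightarrow> ((nat \<Rightarrow> real) \<Rightarrow> 'a) set" where
  "htp_class n X x0 f = {g \<in> Omega_set n X x0. rel_homotopic n X x0 f g}"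

definition quotient_topology :: "'a topology \<Rightarrow> ('a \<Rightarrow> 'b) \<Rightarrow> 'b topology" where
  "quotient_topology T q =
     topology (\<lambda>U. U \<subseteq> q ` topspace T \<and> openin T {x \<in> topspace T. q x \<in> U})"

lemma istopology_quotient:
  "istopology (\<lambda>U. U \<subseteq> q ` topspace T \<and> openin T {x \<in> topspace T. q x \<in> U})"
proof -
  have 1: "{x \<in> topspace T. q x \<in> S \<and> q x \<in> S'} = {x \<in> topspace T. q x \<in> S} \<inter> {x \<in> topspace T. q x \<in> S'}" for S S'
    by auto
  have 2: "{x \<in> topspace T. \<exists>X\<in>K. q x \<in> X} = \<Union>((\<lambda>S. {x \<in> topspace T. q x \<in> S}) ` K)" for K
    by auto
  show ?thesis
    unfolding istopology_def by (auto simp only: 1 2 Int_iff Union_iff intro!: openin_Union openin_Int)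
qed

definition pi_top :: "nat \<Rightarrow> 'a topology \<Rightarrow> 'a \<Rightarrow> ((nat \<Rightarrow> real) \<Rightarrow> 'a) set topology" where
  "pi_top n X x0 = quotient_topology (Omega_top n X x0) (htp_class n X x0)"

definition homogeneous_space :: "'a topology \<Rightarrow> bool" where
  "homogeneous_space T \<longleftrightarrow>
     (\<forall>a\<in>topspace T. \<forall>b\<in>topspace T. \<exists>h. homeomorphic_map T T h \<and> h a = b)"

end

theory Submission
  imports Defs
begin

lemma cube_topspace: "topspace (cube_top n) = (\<Pi>\<^sub>E i\<in>{..<n}. {0..1::real})"
  by (simp add: cube_top_def)

lemma upd_in_cube:
  assumes "t \<in> topspace (cube_top n)" "0 < n" "v \<in> {0..1}"
  shows "t(0:=v) \<in> topspace (cube_top n)"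
  using assms by (auto simp: cube_topspace PiE_iff extensional_def)

lemma upd_in_boundary:
  assumes "t \<in> topspace (cube_top n)" "0 < n" "v \<in> {0..1}"
    and "v = 0 \<or> v = 1 \<or> (\<exists>i<n. i \<noteq> 0 \<and> (t i = 0 \<or> t i = 1))"
  shows "t(0:=v) \<in> cube_boundary n"
proof -
  have "\<exists>i<n. (t(0:=v)) i = 0 \<or> (t(0:=v)) i = 1" using assms(2,4) by (metis fun_upd_same fun_upd_other)
  then show ?thesis using upd_in_cube[OF assms(1-3)] by (simp add: cube_boundary_def)
qed

lemma boundary_cases:
  assumes "t \<in> cube_boundary n"
  shows "t \<in> topspace (cube_top n) \<and> (t 0 = 0 \<or> t 0 = 1 \<or> (\<exists>i<n. i \<noteq> 0 \<and> (t i = 0 \<or> t i = 1)))"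
  using assms unfolding cube_boundary_def by auto

lemma cont_upd:
  assumes "0 < n" "continuous_map Z (cube_top n) \<sigma>"
    and "continuous_map Z euclideanreal v" and "\<And>z. z \<in> topspace Z \<Longrightarrow> v z \<in> {0..1}"
  shows "continuous_map Z (cube_top n) (\<lambda>z. (\<sigma> z)(0:= v z))"
  unfolding cube_top_def continuous_map_componentwise
proof (intro conjI ballI)
  show "(\<lambda>z. (\<sigma> z)(0 := v z)) ` topspace Z \<subseteq> extensional {..<n}"
    using assms(1,2) unfolding cube_top_def continuous_map_componentwise
    by (auto simp: extensional_def)
  fix k assume k: "k \<in> {..<n}"
  show "continuous_map Z (top_of_set {0..1}) (\<lambda>x. ((\<sigma> x)(0 := v x)) k)"
  proof (cases "k = 0")
    case True
    then show ?thesis using assms(3,4) by (auto simp: continuous_map_in_subtopology)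
  next
    case False
    then show ?thesis using assms(2) k unfolding cube_top_def continuous_map_componentwise by auto
  qed
qed

lemma cont_coord0:
  assumes "0 < n"
  shows "continuous_map (cube_top n) euclideanreal (\<lambda>t. t 0)"
proof -
  have "continuous_map (cube_top n) (top_of_set {0..1}) (\<lambda>t. t 0)"
    unfolding cube_top_def using assms by (intro continuous_map_product_projection) auto
  then show ?thesis by (simp add: continuous_map_in_subtopology)
qed

lemma coord0_in: "t \<in> topspace (cube_top n) \<Longrightarrow> 0 < n \<Longrightarrow> t 0 \<in> {0..1}"
  by (simp add: cube_topspace PiE_iff)

lemma cont_proj0:
  assumes "0 < n"
  shows "continuous_map (cube_top n) (top_of_set {0..1}) (\<lambda>t. t 0)"
    unfolding cube_top_def using assms by (intro continuous_map_product_projection) auto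

abbreviation "I01 \<equiv> top_of_set {0..1::real}"

lemma reparam:
  assumes n: "0<n" and f: "f \<in> Omega_set n X x0"
    and al: "continuous_map (prod_topology I01 I01) euclideanreal (\<lambda>z. \<alpha> (fst z) (snd z))"
    and rng: "\<And>s u. s\<in>{0..1} \<Longrightarrow> u\<in>{0..1} \<Longrightarrow> \<alpha> s u \<in> {0..1}"
    and e: "\<And>s. s\<in>{0..1} \<Longrightarrow> \<alpha> s 0 \<in> {0,1} \<and> \<alpha> s 1 \<in> {0,1}"
  shows "rel_homotopic n X x0 (\<lambda>t. f(t(0:=\<alpha> 0 (t 0)))) (\<lambda>t. f(t(0:=\<alpha> 1 (t 0))))"
proof -
  have c1: "continuous_map (prod_topology I01 (cube_top n)) I01 (\<lambda>z. snd z 0)"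
    using continuous_map_compose[OF continuous_map_snd cont_proj0[OF n]] by (simp add: o_def)
  have c2: "continuous_map (prod_topology I01 (cube_top n)) (prod_topology I01 I01) (\<lambda>z. (fst z, snd z 0))"
    by (intro continuous_map_pairedI continuous_map_fst c1)
  have c3: "continuous_map (prod_topology I01 (cube_top n)) euclideanreal (\<lambda>z. \<alpha> (fst z) (snd z 0))"
    using continuous_map_compose[OF c2 al] by (simp add: o_def)
  have psi: "continuous_map (prod_topology I01 (cube_top n)) (cube_top n) (\<lambda>z. (snd z)(0 := \<alpha> (fst z) (snd z 0)))"
  proof (rule cont_upd[OF n continuous_map_snd c3])
    fix z assume "z \<in> topspace (prod_topology I01 (cube_top n))"
    then have "fst z \<in> {0..1}" "snd z \<in> topspace (cube_top n)" by (auto simp: topspace_prod_topology)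
    then show "\<alpha> (fst z) (snd z 0) \<in> {0..1}"
      using coord0_in[OF _ n] by (intro rng) auto
  qed
  have fc: "continuous_map (cube_top n) X f" and fb: "\<And>t. t \<in> cube_boundary n \<Longrightarrow> f t = x0"
    using f by (auto simp: Omega_set_def)
  have H: "continuous_map (prod_topology I01 (cube_top n)) X (\<lambda>z. f ((snd z)(0 := \<alpha> (fst z) (snd z 0))))"
    using continuous_map_compose[OF psi fc] by (simp add: o_def)
  show ?thesis
    unfolding rel_homotopic_def homotopic_with_def
  proof (intro exI conjI allI ballI)
    show "continuous_map (prod_topology I01 (cube_top n)) X (\<lambda>z. f ((snd z)(0 := \<alpha> (fst z) (snd z 0))))"
      by (rule H)
  next
    fix s :: real and t assume s: "s \<in> {0..1}" and t: "t \<in> cube_boundary n"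
    from boundary_cases[OF t] have tt: "t \<in> topspace (cube_top n)"
      and cs: "t 0 = 0 \<or> t 0 = 1 \<or> (\<exists>i<n. i \<noteq> 0 \<and> (t i = 0 \<or> t i = 1))" by auto
    have t0: "t 0 \<in> {0..1}" using tt n by (rule coord0_in)
    have "t(0 := \<alpha> s (t 0)) \<in> cube_boundary n"
      apply (rule upd_in_boundary[OF tt n rng[OF s t0]])
      using cs e[OF s] by fastforce
    then show "(\<lambda>z. f ((snd z)(0 := \<alpha> (fst z) (snd z 0)))) (s, t) = x0"
      using fb by simp
  qed simp_all
qed

definition conc :: "((nat\<Rightarrow>real)\<Rightarrow>'a) \<Rightarrow> ((nat\<Rightarrow>real)\<Rightarrow>'a) \<Rightarrow> (nat\<Rightarrow>real) \<Rightarrow> 'a" where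
  "conc g f = (\<lambda>t. if t 0 \<le> 1/2 then g (t(0:=2*t 0)) else f (t(0:=2*t 0 - 1)))"

lemma rel_homotopicE:
  assumes "rel_homotopic n X x0 g g'"
  obtains K where "continuous_map (prod_topology I01 (cube_top n)) X K"
    "\<And>x. K(0,x) = g x" "\<And>x. K(1,x) = g' x"
    "\<And>s t. s \<in> {0..1} \<Longrightarrow> t \<in> cube_boundary n \<Longrightarrow> K(s,t) = x0"
proof -
  from assms obtain K where "continuous_map (prod_topology I01 (cube_top n)) X K"
    "\<forall>x. K(0,x) = g x" "\<forall>x. K(1,x) = g' x"
    "\<forall>s\<in>{0..1}. \<forall>t\<in>cube_boundary n. K(s,t) = x0"
    unfolding rel_homotopic_def homotopic_with_def by blast
  then show ?thesis using that by blast
qed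

lemma conc_hom:
  assumes n: "0<n" and hg: "rel_homotopic n X x0 g g'" and hf: "rel_homotopic n X x0 f f'"
  shows "rel_homotopic n X x0 (conc g f) (conc g' f')"
proof -
  obtain K where K: "continuous_map (prod_topology I01 (cube_top n)) X K"
    "\<And>x. K(0,x) = g x" "\<And>x. K(1,x) = g' x"
    "\<And>s t. s \<in> {0..1} \<Longrightarrow> t \<in> cube_boundary n \<Longrightarrow> K(s,t) = x0"
    using rel_homotopicE[OF hg] by blast
  obtain L where L: "continuous_map (prod_topology I01 (cube_top n)) X L"
    "\<And>x. L(0,x) = f x" "\<And>x. L(1,x) = f' x"
    "\<And>s t. s \<in> {0..1} \<Longrightarrow> t \<in> cube_boundary n \<Longrightarrow> L(s,t) = x0"
    using rel_homotopicE[OF hf] by blast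
  let ?P = "prod_topology I01 (cube_top n)"
  have p: "continuous_map ?P euclideanreal (\<lambda>z. snd z 0)"
    using continuous_map_compose[OF continuous_map_snd cont_coord0[OF n]] by (simp add: o_def)
  have tsP: "z \<in> topspace ?P \<Longrightarrow> fst z \<in> {0..1} \<and> snd z \<in> topspace (cube_top n) \<and> snd z 0 \<in> {0..1}" for z
    using coord0_in[OF _ n] by (auto simp: topspace_prod_topology)
  have c1: "continuous_map (subtopology ?P {z \<in> topspace ?P. snd z 0 \<le> 1/2}) X
            (\<lambda>z. K(fst z, (snd z)(0:=2 * snd z 0)))"
  proof -
    let ?S = "subtopology ?P {z \<in> topspace ?P. snd z 0 \<le> 1/2}"
    have "continuous_map ?S (cube_top n) (\<lambda>z. (snd z)(0:=2 * snd z 0))"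
    proof (rule cont_upd[OF n])
      show "continuous_map ?S (cube_top n) snd"
        by (intro continuous_map_from_subtopology continuous_map_snd)
      show "continuous_map ?S euclideanreal (\<lambda>z. 2 * snd z 0)"
        by (intro continuous_map_from_subtopology continuous_intros p)
      show "z \<in> topspace ?S \<Longrightarrow> 2 * snd z 0 \<in> {0..1}" for z
        using tsP[of z] by auto
    qed
    then have "continuous_map ?S ?P (\<lambda>z. (fst z, (snd z)(0:=2 * snd z 0)))"
      by (rule continuous_map_pairedI[OF continuous_map_from_subtopology[OF continuous_map_fst]])
    from continuous_map_compose[OF this K(1)] show ?thesis by (simp add: o_def)
  qed
  have c2: "continuous_map (subtopology ?P {z \<in> topspace ?P. 1/2 \<le> snd z 0}) X
            (\<lambda>z. L(fst z, (snd z)(0:=2 * snd z 0 - 1)))"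
  proof -
    let ?S = "subtopology ?P {z \<in> topspace ?P. 1/2 \<le> snd z 0}"
    have "continuous_map ?S (cube_top n) (\<lambda>z. (snd z)(0:=2 * snd z 0 - 1))"
    proof (rule cont_upd[OF n])
      show "continuous_map ?S (cube_top n) snd"
        by (intro continuous_map_from_subtopology continuous_map_snd)
      show "continuous_map ?S euclideanreal (\<lambda>z. 2 * snd z 0 - 1)"
        by (intro continuous_map_from_subtopology continuous_intros p)
      show "z \<in> topspace ?S \<Longrightarrow> 2 * snd z 0 - 1 \<in> {0..1}" for z
        using tsP[of z] by auto
    qed
    then have "continuous_map ?S ?P (\<lambda>z. (fst z, (snd z)(0:=2 * snd z 0 - 1)))"
      by (rule continuous_map_pairedI[OF continuous_map_from_subtopology[OF continuous_map_fst]])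
    from continuous_map_compose[OF this L(1)] show ?thesis by (simp add: o_def)
  qed
  have H: "continuous_map ?P X (\<lambda>z. if snd z 0 \<le> 1/2 then K(fst z, (snd z)(0:=2 * snd z 0))
                                   else L(fst z, (snd z)(0:=2 * snd z 0 - 1)))"
  proof (rule continuous_map_cases_le[where q="\<lambda>z. 1/2", OF p _ c1 c2])
    show "continuous_map ?P euclideanreal (\<lambda>z. 1/2::real)" by simp
    fix z assume z: "z \<in> topspace ?P" "snd z 0 = 1/2"
    then have "(snd z)(0:=2 * snd z 0) \<in> cube_boundary n" "(snd z)(0:=2 * snd z 0 - 1) \<in> cube_boundary n"
      using tsP[OF z(1)] by (auto intro!: upd_in_boundary n)
    then show "K(fst z, (snd z)(0:=2 * snd z 0)) = L(fst z, (snd z)(0:=2 * snd z 0 - 1))"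
      using K(4) L(4) tsP[OF z(1)] by auto
  qed
  show ?thesis
    unfolding rel_homotopic_def homotopic_with_def
  proof (intro exI conjI allI ballI)
    fix s :: real and t assume s: "s \<in> {0..1}" and t: "t \<in> cube_boundary n"
    from boundary_cases[OF t] have tt: "t \<in> topspace (cube_top n)"
      and cs: "t 0 = 0 \<or> t 0 = 1 \<or> (\<exists>i<n. i \<noteq> 0 \<and> (t i = 0 \<or> t i = 1))" by auto
    have t0: "t 0 \<in> {0..1}" using tt n by (rule coord0_in)
    show "(\<lambda>z. if snd z 0 \<le> 1/2 then K(fst z, (snd z)(0:=2 * snd z 0))
                                   else L(fst z, (snd z)(0:=2 * snd z 0 - 1))) (s, t) = x0"
    proof (cases "t 0 \<le> 1/2")
      case True
      have "t(0:=2*t 0) \<in> cube_boundary n"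
        using True t0 cs by (intro upd_in_boundary[OF tt n]) auto
      then show ?thesis using True K(4)[OF s] by simp
    next
      case False
      have "t(0:=2*t 0 - 1) \<in> cube_boundary n"
        using False t0 cs by (intro upd_in_boundary[OF tt n]) auto
      then show ?thesis using False L(4)[OF s] by simp
    qed
  qed (use H in \<open>auto simp: conc_def K(2,3) L(2,3)\<close>)
qed

lemma conc_left: "t 0 \<le> 1/2 \<Longrightarrow> conc g f t = g (t(0:=2*t 0))"
  by (simp add: conc_def)

lemma conc_right: "\<not> t 0 \<le> 1/2 \<Longrightarrow> conc g f t = f (t(0:=2*t 0 - 1))"
  by (simp add: conc_def)

lemma rel_Omega:
  assumes "rel_homotopic n X x0 f g"
  shows "f \<in> Omega_set n X x0" "g \<in> Omega_set n X x0"
  using homotopic_with_imp_continuous_maps[OF assms[unfolded rel_homotopic_def]]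
    homotopic_with_imp_property[OF assms[unfolded rel_homotopic_def]]
  by (auto simp: Omega_set_def)

lemma rel_refl: "f \<in> Omega_set n X x0 \<Longrightarrow> rel_homotopic n X x0 f f"
  by (simp add: rel_homotopic_def Omega_set_def)

lemma rel_sym: "rel_homotopic n X x0 f g \<Longrightarrow> rel_homotopic n X x0 g f"
  unfolding rel_homotopic_def by (rule homotopic_with_symD)

lemma rel_trans: "rel_homotopic n X x0 f g \<Longrightarrow> rel_homotopic n X x0 g h \<Longrightarrow> rel_homotopic n X x0 f h"
  unfolding rel_homotopic_def by (rule homotopic_with_trans)

lemma rel_eq_left:
  assumes "rel_homotopic n X x0 f g" "\<And>t. t \<in> topspace (cube_top n) \<Longrightarrow> f' t = f t"
  shows "rel_homotopic n X x0 f' g"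
proof -
  have f: "f \<in> Omega_set n X x0" using rel_Omega[OF assms(1)] by simp
  have bd: "cube_boundary n \<subseteq> topspace (cube_top n)" by (auto simp: cube_boundary_def)
  have "rel_homotopic n X x0 f' f"
    unfolding rel_homotopic_def
  proof (rule homotopic_with_equal)
    show "\<forall>t\<in>cube_boundary n. f t = x0" using f by (simp add: Omega_set_def)
    then show "\<forall>t\<in>cube_boundary n. f' t = x0" using assms(2) bd by auto
    show "continuous_map (cube_top n) X f'"
      using f assms(2) by (auto simp: Omega_set_def intro: continuous_map_eq)
  qed (use assms(2) in auto)
  then show ?thesis using assms(1) by (rule rel_trans)
qed

lemma rel_eq:
  assumes "rel_homotopic n X x0 f g" "\<And>t. t \<in> topspace (cube_top n) \<Longrightarrow> f' t = f t"
    "\<And>t. t \<in> topspace (cube_top n) \<Longrightarrow> g' t = g t"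
  shows "rel_homotopic n X x0 f' g'"
  using rel_eq_left[OF rel_sym[OF rel_eq_left[OF rel_sym[OF assms(1)] assms(3)]] assms(2)] .

lemma reparam':
  fixes \<alpha> :: "real \<Rightarrow> real \<Rightarrow> real"
  assumes n: "0<n" and f: "f \<in> Omega_set n X x0"
    and al: "continuous_on ({0..1}\<times>{0..1}) (\<lambda>z. \<alpha> (fst z) (snd z))"
    and rng: "\<And>s u. s\<in>{0..1} \<Longrightarrow> u\<in>{0..1} \<Longrightarrow> \<alpha> s u \<in> {0..1}"
    and e: "\<And>s. s\<in>{0..1} \<Longrightarrow> \<alpha> s 0 \<in> {0,1} \<and> \<alpha> s 1 \<in> {0,1}"
    and e0: "\<And>t. t \<in> topspace (cube_top n) \<Longrightarrow> f(t(0:=\<alpha> 0 (t 0))) = g t"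
    and e1: "\<And>t. t \<in> topspace (cube_top n) \<Longrightarrow> f(t(0:=\<alpha> 1 (t 0))) = h t"
  shows "rel_homotopic n X x0 g h"
proof -
  have "rel_homotopic n X x0 (\<lambda>t. f(t(0:=\<alpha> 0 (t 0)))) (\<lambda>t. f(t(0:=\<alpha> 1 (t 0))))"
    by (rule reparam[where \<alpha>=\<alpha>, OF n f _ rng e]) (use al in simp_all)
  then show ?thesis by (rule rel_eq) (use e0 e1 in auto)
qed

definition lrev :: "((nat\<Rightarrow>real)\<Rightarrow>'a) \<Rightarrow> (nat\<Rightarrow>real) \<Rightarrow> 'a" where
  "lrev g = (\<lambda>t. g (t(0:=1 - t 0)))"

lemma lrev_Omega:
  assumes n: "0<n" and g: "g \<in> Omega_set n X x0"
  shows "lrev g \<in> Omega_set n X x0"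
proof -
  have "rel_homotopic n X x0 (lrev g) (lrev g)"
  proof (rule reparam'[OF n g, where \<alpha>="\<lambda>s u. 1 - u"])
    show "continuous_on ({0..1}\<times>{0..1}) (\<lambda>z. 1 - snd z :: real)"
      by (intro continuous_intros)
  qed (simp_all add: lrev_def)
  then show ?thesis by (rule rel_Omega)
qed

lemma lrev_lrev: "lrev (lrev g) = g"
  by (simp add: lrev_def)

lemma conc_Omega:
  assumes n: "0<n" and "g \<in> Omega_set n X x0" "f \<in> Omega_set n X x0"
  shows "conc g f \<in> Omega_set n X x0"
  by (rule rel_Omega(1)[OF conc_hom[OF n rel_refl[OF assms(2)] rel_refl[OF assms(3)]]])

lemma const_Omega: "x0 \<in> topspace X \<Longrightarrow> (\<lambda>t. x0) \<in> Omega_set n X x0"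
  by (simp add: Omega_set_def)

lemma bnd_x0:
  assumes "f \<in> Omega_set n X x0" "t \<in> topspace (cube_top n)" "0 < n" "v = 0 \<or> v = 1"
  shows "f (t(0:=v)) = x0"
proof -
  have "v \<in> {0..1}" using assms(4) by auto
  then have "t(0:=v) \<in> cube_boundary n" using assms(4) by (intro upd_in_boundary[OF assms(2,3)]) blast+
  then show ?thesis using assms(1) by (simp add: Omega_set_def)
qed

lemma cancel:
  assumes n: "0<n" and g: "g \<in> Omega_set n X x0"
  shows "rel_homotopic n X x0 (conc (lrev g) g) (\<lambda>t. x0)"
proof (rule reparam'[OF n g, where \<alpha>="\<lambda>s u. s + (1-s) * \<bar>2*u - 1\<bar>"])
  show "continuous_on ({0..1}\<times>{0..1}) (\<lambda>z::real\<times>real. fst z + (1 - fst z) * \<bar>2 * snd z - 1\<bar>)"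
    by (intro continuous_intros)
  fix s u :: real assume "s \<in> {0..1}" "u \<in> {0..1}"
  moreover have "\<bar>2*u - 1\<bar> \<le> 1" "0 \<le> \<bar>2*u - 1\<bar>" using \<open>u \<in> {0..1}\<close> by auto
  ultimately have "(1-s) * \<bar>2*u - 1\<bar> \<le> 1 - s" "0 \<le> (1-s) * \<bar>2*u - 1\<bar>"
    by (simp_all add: mult_left_le)
  then show "s + (1-s) * \<bar>2*u - 1\<bar> \<in> {0..1}" using \<open>s \<in> {0..1}\<close> by simp
next
  fix t assume t: "t \<in> topspace (cube_top n)"
  show "g (t(0 := 0 + (1 - 0) * \<bar>2 * t 0 - 1\<bar>)) = conc (lrev g) g t"
  proof (cases "t 0 \<le> 1/2")
    case True
    then have "\<bar>2 * t 0 - 1\<bar> = 1 - 2 * t 0" by simp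
    then show ?thesis using True by (simp add: conc_def lrev_def)
  next
    case False
    then have "\<bar>2 * t 0 - 1\<bar> = 2 * t 0 - 1" by simp
    then show ?thesis using False by (simp add: conc_def lrev_def)
  qed
  show "g (t(0 := 1 + (1 - 1) * \<bar>2 * t 0 - 1\<bar>)) = x0"
    using bnd_x0[OF g t n] by simp
qed simp

lemma assoc:
  assumes n: "0<n" and g: "g \<in> Omega_set n X x0" and f: "f \<in> Omega_set n X x0"
  shows "rel_homotopic n X x0 (conc (lrev g) (conc g f)) (conc (conc (lrev g) g) f)"
proof -
  let ?w = "conc (lrev g) (conc g f)"
  have w: "?w \<in> Omega_set n X x0"
    by (intro conc_Omega n lrev_Omega g f conc_Omega)
  define \<beta> where "\<beta> = (\<lambda>u::real. min (2*u) (min (u + 1/4) ((u+1)/2)))"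
  have b01: "\<beta> u \<in> {0..1}" if "u \<in> {0..1}" for u
    using that by (auto simp: \<beta>_def min_le_iff_disj)
  show ?thesis
  proof (rule reparam'[OF n w, where \<alpha>="\<lambda>s u. (1-s)*u + s*\<beta> u"])
    show "continuous_on ({0..1}\<times>{0..1}) (\<lambda>z::real\<times>real. (1 - fst z) * snd z + fst z * \<beta> (snd z))"
      unfolding \<beta>_def by (intro continuous_intros) auto
  next
    fix s u :: real assume su: "s \<in> {0..1}" "u \<in> {0..1}"
    have "(1-s)*u + s*\<beta> u \<le> (1-s)*1 + s*1"
      using su b01[OF su(2)] by (intro add_mono mult_left_mono) auto
    moreover have "0 \<le> (1-s)*u + s*\<beta> u"
      using su b01[OF su(2)] by auto
    ultimately show "(1-s)*u + s*\<beta> u \<in> {0..1}" by simp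
  next
    fix s :: real
    show "(1 - s) * 0 + s * \<beta> 0 \<in> {0, 1} \<and> (1 - s) * 1 + s * \<beta> 1 \<in> {0, 1}"
      by (simp add: \<beta>_def)
  next
    fix t assume t: "t \<in> topspace (cube_top n)"
    show "?w (t(0 := (1 - 0) * t 0 + 0 * \<beta> (t 0))) = ?w t" by simp
    have t0: "t 0 \<in> {0..1}" using t n by (rule coord0_in)
    show "?w (t(0 := (1 - 1) * t 0 + 1 * \<beta> (t 0))) = conc (conc (lrev g) g) f t"
    proof (cases "t 0 \<le> 1/4")
      case True
      then have "\<beta> (t 0) = 2 * t 0" by (auto simp: \<beta>_def)
      then show ?thesis using True by (simp add: conc_def lrev_def)
    next
      case False
      note F = this
      show ?thesis
      proof (cases "t 0 \<le> 1/2")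
        case True
        then have "\<beta> (t 0) = t 0 + 1/4" using F by (auto simp: \<beta>_def)
        moreover have "2 * (t 0 + 1/4) - 1 = 2 * t 0 - 1/2" by simp
        moreover have "2 * (2 * t 0 - 1/2) = 2 * (2 * t 0) - 1" by simp
        ultimately show ?thesis using True F by (simp add: conc_def lrev_def)
      next
        case False
        then have b: "\<beta> (t 0) = (t 0 + 1)/2" using F by (auto simp: \<beta>_def)
        have b2: "2 * \<beta> (t 0) - 1 = t 0" unfolding b by (simp add: field_simps)
        have b3: "\<not> \<beta> (t 0) \<le> 1/2" using False unfolding b by simp
        have "?w (t(0 := (1 - 1) * t 0 + 1 * \<beta> (t 0))) = ?w (t(0 := \<beta> (t 0)))" by simp
        also have "\<dots> = conc g f (t(0 := t 0))"
          using b3 by (simp add: conc_right b2)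
        also have "\<dots> = f (t(0 := 2 * t 0 - 1))"
          using False by (simp add: conc_right)
        also have "\<dots> = conc (conc (lrev g) g) f t"
          using False by (simp add: conc_right)
        finally show ?thesis .
      qed
    qed
  qed
qed

lemma const_conc:
  assumes n: "0<n" and x0: "x0 \<in> topspace X" and f: "f \<in> Omega_set n X x0"
  shows "rel_homotopic n X x0 (conc (\<lambda>t. x0) f) f"
proof (rule reparam'[OF n f, where \<alpha>="\<lambda>s u. (1-s)*max 0 (2*u-1) + s*u"])
  show "continuous_on ({0..1}\<times>{0..1}) (\<lambda>z::real\<times>real. (1 - fst z) * max 0 (2 * snd z - 1) + fst z * snd z)"
    by (intro continuous_intros)
next
  fix s u :: real assume su: "s \<in> {0..1}" "u \<in> {0..1}"
  have m: "max 0 (2*u-1) \<in> {0..1}" using su by auto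
  have "(1-s)*max 0 (2*u-1) + s*u \<le> (1-s)*1 + s*1"
    using su m by (intro add_mono mult_left_mono) auto
  moreover have "0 \<le> (1-s)*max 0 (2*u-1) + s*u"
    using su m by auto
  ultimately show "(1-s)*max 0 (2*u-1) + s*u \<in> {0..1}" by simp
next
  fix s :: real
  show "(1 - s) * max 0 (2 * 0 - 1) + s * 0 \<in> {0, 1} \<and> (1 - s) * max 0 (2 * 1 - 1) + s * 1 \<in> {0, 1}"
    by simp
next
  fix t assume t: "t \<in> topspace (cube_top n)"
  show "f (t(0 := (1 - 0) * max 0 (2 * t 0 - 1) + 0 * t 0)) = conc (\<lambda>t. x0) f t"
  proof (cases "t 0 \<le> 1/2")
    case True
    then show ?thesis using bnd_x0[OF f t n, of 0] by (simp add: conc_def)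
  next
    case False
    then show ?thesis by (simp add: conc_def)
  qed
  show "f (t(0 := (1 - 1) * max 0 (2 * t 0 - 1) + 1 * t 0)) = f t" by simp
qed

lemma conc_inv:
  assumes n: "0<n" and x0: "x0 \<in> topspace X" and g: "g \<in> Omega_set n X x0" and f: "f \<in> Omega_set n X x0"
  shows "rel_homotopic n X x0 (conc (lrev g) (conc g f)) f"
proof -
  have "rel_homotopic n X x0 (conc (conc (lrev g) g) f) (conc (\<lambda>t. x0) f)"
    by (rule conc_hom[OF n cancel[OF n g] rel_refl[OF f]])
  then show ?thesis
    by (rule rel_trans[OF rel_trans[OF assoc[OF n g f]] const_conc[OF n x0 f]])
qed

lemma topspace_CO: "topspace (compact_open_topology K X) = UNIV"
proof -
  have "UNIV \<in> {{f. f ` C \<subseteq> U} | C U. compactin K C \<and> openin X U}"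
    by (rule CollectI, rule exI[of _ "{}"], rule exI[of _ "topspace X"]) auto
  then show ?thesis unfolding compact_open_topology_def by auto
qed

lemma topspace_OT: "topspace (Omega_top n X x0) = Omega_set n X x0"
  by (simp add: Omega_top_def topspace_CO)

lemma compact_half:
  assumes n: "0 < n" and C: "compactin (cube_top n) C"
  shows "compactin (cube_top n) ((\<lambda>t. t(0:=2*t 0 - 1)) ` {t\<in>C. 1/2 \<le> t 0})"
proof -
  let ?Y = "subtopology (cube_top n) {t. 1/2 \<le> t 0}"
  have Csub: "C \<subseteq> topspace (cube_top n)" using C by (rule compactin_subset_topspace)
  have "closedin (cube_top n) {t \<in> topspace (cube_top n). t 0 \<in> {1/2..}}"
    by (rule closedin_continuous_map_preimage[OF cont_coord0[OF n]]) (simp add: closed_closedin[symmetric])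
  from compact_Int_closedin[OF C this]
  have "compactin (cube_top n) {t\<in>C. 1/2 \<le> t 0}"
    by (rule back_subst) (use Csub in auto)
  then have c2: "compactin ?Y {t\<in>C. 1/2 \<le> t 0}"
    by (simp add: compactin_subtopology subset_iff)
  have "continuous_map ?Y (cube_top n) (\<lambda>t. t(0:=2*t 0 - 1))"
  proof (rule cont_upd[OF n, where \<sigma>="\<lambda>t. t"])
    show "continuous_map ?Y (cube_top n) (\<lambda>t. t)"
      by (simp add: continuous_map_from_subtopology)
    show "continuous_map ?Y euclideanreal (\<lambda>t. 2 * t 0 - 1)"
      by (intro continuous_intros continuous_map_from_subtopology cont_coord0[OF n])
    show "z \<in> topspace ?Y \<Longrightarrow> 2 * z 0 - 1 \<in> {0..1}" for z
      using coord0_in[OF _ n, of z] by auto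
  qed
  from image_compactin[OF c2 this] show ?thesis .
qed

lemma conc_iff:
  assumes n: "0 < n" and g: "g \<in> Omega_set n X x0" and f: "f \<in> Omega_set n X x0"
    and Csub: "C \<subseteq> topspace (cube_top n)"
  shows "(conc g f ` C \<subseteq> V) \<longleftrightarrow>
         (g ` ((\<lambda>t. t(0:=2*t 0)) ` {t\<in>C. t 0 \<le> 1/2}) \<subseteq> V \<and>
          f ` ((\<lambda>t. t(0:=2*t 0 - 1)) ` {t\<in>C. 1/2 \<le> t 0}) \<subseteq> V)"
proof
  assume L: "conc g f ` C \<subseteq> V"
  show "g ` ((\<lambda>t. t(0:=2*t 0)) ` {t\<in>C. t 0 \<le> 1/2}) \<subseteq> V \<and>
          f ` ((\<lambda>t. t(0:=2*t 0 - 1)) ` {t\<in>C. 1/2 \<le> t 0}) \<subseteq> V"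
  proof (intro conjI subsetI)
    fix x assume "x \<in> g ` ((\<lambda>t. t(0:=2*t 0)) ` {t\<in>C. t 0 \<le> 1/2})"
    then obtain t where t: "t \<in> C" "t 0 \<le> 1/2" "x = g (t(0:=2*t 0))" by auto
    then have "x = conc g f t" by (simp add: conc_left)
    then show "x \<in> V" using L t by auto
  next
    fix x assume "x \<in> f ` ((\<lambda>t. t(0:=2*t 0 - 1)) ` {t\<in>C. 1/2 \<le> t 0})"
    then obtain t where t: "t \<in> C" "1/2 \<le> t 0" "x = f (t(0:=2*t 0 - 1))" by auto
    have tt: "t \<in> topspace (cube_top n)" using t Csub by auto
    show "x \<in> V"
    proof (cases "t 0 = 1/2")
      case True
      have "x = x0" using t True bnd_x0[OF f tt n, of 0] by simp
      moreover have e: "2 * t 0 = 1" using True by simp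
      have le: "t 0 \<le> 1/2" using True by simp
      have "conc g f t = g (t(0:=1))" unfolding conc_left[of t g f, OF le] e by (rule refl)
      then have "conc g f t = x0" using bnd_x0[OF g tt n, of 1] by simp
      ultimately show ?thesis using L t by auto
    next
      case False
      then have "x = conc g f t" using t by (simp add: conc_right)
      then show ?thesis using L t by auto
    qed
  qed
next
  assume R: "g ` ((\<lambda>t. t(0:=2*t 0)) ` {t\<in>C. t 0 \<le> 1/2}) \<subseteq> V \<and>
          f ` ((\<lambda>t. t(0:=2*t 0 - 1)) ` {t\<in>C. 1/2 \<le> t 0}) \<subseteq> V"
  show "conc g f ` C \<subseteq> V"
  proof
    fix x assume "x \<in> conc g f ` C"
    then obtain t where t: "t \<in> C" "x = conc g f t" by auto
    show "x \<in> V"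
    proof (cases "t 0 \<le> 1/2")
      case True
      then show ?thesis using R t by (auto simp: conc_left)
    next
      case False
      then show ?thesis using R t by (auto simp: conc_right)
    qed
  qed
qed

lemma cont_conc:
  assumes n: "0 < n" and g: "g \<in> Omega_set n X x0"
  shows "continuous_map (Omega_top n X x0) (Omega_top n X x0) (conc g)"
proof -
  let ?S = "{{f. f ` C \<subseteq> U} | C U. compactin (cube_top n) C \<and> openin X U}"
  have "continuous_map (Omega_top n X x0) (compact_open_topology (cube_top n) X) (conc g)"
    unfolding compact_open_topology_def
  proof (rule continuous_on_generated_topo)
    show "conc g ` topspace (Omega_top n X x0) \<subseteq> \<Union> ?S"
      using topspace_CO[of "cube_top n" X] unfolding compact_open_topology_def by simp
  next
    fix U assume "U \<in> ?S"
    then obtain C V where U: "U = {f. f ` C \<subseteq> V}" and C: "compactin (cube_top n) C" and V: "openin X V"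
      by auto
    have Csub: "C \<subseteq> topspace (cube_top n)" using C by (rule compactin_subset_topspace)
    let ?P = "g ` ((\<lambda>t. t(0:=2*t 0)) ` {t\<in>C. t 0 \<le> 1/2}) \<subseteq> V"
    let ?C2 = "(\<lambda>t. t(0:=2*t 0 - 1)) ` {t\<in>C. 1/2 \<le> t 0}"
    have key: "conc g f \<in> U \<longleftrightarrow> ?P \<and> f \<in> {f. f ` ?C2 \<subseteq> V}" if "f \<in> Omega_set n X x0" for f
      using conc_iff[OF n g that Csub, of V] unfolding U by (simp only: mem_Collect_eq)
    have eq: "conc g -` U \<inter> topspace (Omega_top n X x0) =
              (if ?P then {f. f ` ?C2 \<subseteq> V} \<inter> Omega_set n X x0 else {})"
    proof (rule set_eqI)
      fix f
      show "f \<in> conc g -` U \<inter> topspace (Omega_top n X x0) \<longleftrightarrow>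
            f \<in> (if ?P then {f. f ` ?C2 \<subseteq> V} \<inter> Omega_set n X x0 else {})"
        unfolding vimage_eq Int_iff topspace_OT using key[of f]
        by (cases ?P; simp only: if_True if_False Int_iff empty_iff; blast)
    qed
    have "openin (compact_open_topology (cube_top n) X) {f. f ` ?C2 \<subseteq> V}"
      unfolding compact_open_topology_def
      by (rule topology_generated_by_Basis) (use compact_half[OF n C] V in blast)
    then have oi: "openin (Omega_top n X x0) ({f. f ` ?C2 \<subseteq> V} \<inter> Omega_set n X x0)"
      unfolding Omega_top_def openin_subtopology by blast
    show "openin (Omega_top n X x0) (conc g -` U \<inter> topspace (Omega_top n X x0))"
    proof (cases ?P)
      case True
      then show ?thesis using oi by (simp only: eq if_True)
    next
      case False
      then show ?thesis by (simp only: eq if_False openin_empty)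
    qed
  qed
  moreover have "conc g \<in> topspace (Omega_top n X x0) \<rightarrow> Omega_set n X x0"
    using conc_Omega[OF n g] by (auto simp: topspace_OT)
  ultimately show ?thesis
    by (simp add: Omega_top_def continuous_map_in_subtopology)
qed

lemma openin_pi:
  "openin (pi_top n X x0) U \<longleftrightarrow>
     U \<subseteq> htp_class n X x0 ` Omega_set n X x0 \<and>
     openin (Omega_top n X x0) {x \<in> Omega_set n X x0. htp_class n X x0 x \<in> U}"
  unfolding pi_top_def quotient_topology_def topology_inverse'[OF istopology_quotient]
  by (simp add: topspace_OT)

lemma topspace_pi: "topspace (pi_top n X x0) = htp_class n X x0 ` Omega_set n X x0"
proof
  show "topspace (pi_top n X x0) \<subseteq> htp_class n X x0 ` Omega_set n X x0"
    unfolding topspace_def by (rule Union_least) (simp add: openin_pi)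
  have e: "{x \<in> Omega_set n X x0. htp_class n X x0 x \<in> htp_class n X x0 ` Omega_set n X x0} = topspace (Omega_top n X x0)"
    by (auto simp: topspace_OT)
  have "openin (pi_top n X x0) (htp_class n X x0 ` Omega_set n X x0)"
    unfolding openin_pi e by simp
  then show "htp_class n X x0 ` Omega_set n X x0 \<subseteq> topspace (pi_top n X x0)"
    by (rule openin_subset)
qed

lemma q_eq:
  assumes "f \<in> Omega_set n X x0" "f' \<in> Omega_set n X x0"
  shows "htp_class n X x0 f = htp_class n X x0 f' \<longleftrightarrow> rel_homotopic n X x0 f f'"
proof
  assume e: "htp_class n X x0 f = htp_class n X x0 f'"
  have "f' \<in> htp_class n X x0 f'" using assms(2) by (simp add: htp_class_def rel_refl)
  then have "f' \<in> htp_class n X x0 f" by (simp only: e)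
  then show "rel_homotopic n X x0 f f'" by (simp add: htp_class_def)
next
  assume r: "rel_homotopic n X x0 f f'"
  show "htp_class n X x0 f = htp_class n X x0 f'"
  proof (rule set_eqI)
    fix h
    show "h \<in> htp_class n X x0 f \<longleftrightarrow> h \<in> htp_class n X x0 f'"
      unfolding htp_class_def mem_Collect_eq
      using rel_trans[OF rel_sym[OF r], of h] rel_trans[OF r, of h] by blast
  qed
qed

definition ind :: "nat \<Rightarrow> 'a topology \<Rightarrow> 'a \<Rightarrow> ((nat\<Rightarrow>real)\<Rightarrow>'a) \<Rightarrow> ((nat\<Rightarrow>real)\<Rightarrow>'a) set \<Rightarrow> ((nat\<Rightarrow>real)\<Rightarrow>'a) set" where
  "ind n X x0 g A = htp_class n X x0 (conc g (SOME f. f \<in> Omega_set n X x0 \<and> htp_class n X x0 f = A))"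

lemma ind_q:
  assumes n: "0 < n" and g: "g \<in> Omega_set n X x0" and f: "f \<in> Omega_set n X x0"
  shows "ind n X x0 g (htp_class n X x0 f) = htp_class n X x0 (conc g f)"
proof -
  let ?f = "SOME f'. f' \<in> Omega_set n X x0 \<and> htp_class n X x0 f' = htp_class n X x0 f"
  have sf: "?f \<in> Omega_set n X x0 \<and> htp_class n X x0 ?f = htp_class n X x0 f"
    by (rule someI[of _ f]) (use f in simp)
  have of: "?f \<in> Omega_set n X x0" using sf by (rule conjunct1)
  have "rel_homotopic n X x0 ?f f" using iffD1[OF q_eq[OF of f] conjunct2[OF sf]] .
  then have "rel_homotopic n X x0 (conc g ?f) (conc g f)"
    by (rule conc_hom[OF n rel_refl[OF g]])
  then have "htp_class n X x0 (conc g ?f) = htp_class n X x0 (conc g f)"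
    using iffD2[OF q_eq[OF conc_Omega[OF n g of] conc_Omega[OF n g f]]] by blast
  then show ?thesis unfolding ind_def .
qed

lemma cont_ind:
  assumes n: "0 < n" and g: "g \<in> Omega_set n X x0"
  shows "continuous_map (pi_top n X x0) (pi_top n X x0) (ind n X x0 g)"
  unfolding continuous_map_def
proof (intro conjI allI impI)
  show "ind n X x0 g \<in> topspace (pi_top n X x0) \<rightarrow> topspace (pi_top n X x0)"
  proof (rule funcsetI)
    fix A assume "A \<in> topspace (pi_top n X x0)"
    then obtain f where f: "f \<in> Omega_set n X x0" and A: "A = htp_class n X x0 f"
      unfolding topspace_pi by blast
    have "ind n X x0 g A = htp_class n X x0 (conc g f)" unfolding A by (rule ind_q[OF n g f])
    then show "ind n X x0 g A \<in> topspace (pi_top n X x0)"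
      unfolding topspace_pi using conc_Omega[OF n g f] by (simp only: image_eqI)
  qed
next
  fix U assume U: "openin (pi_top n X x0) U"
  let ?q = "htp_class n X x0"
  let ?W = "{x \<in> Omega_set n X x0. ?q x \<in> U}"
  have W: "openin (Omega_top n X x0) ?W" using U unfolding openin_pi by (rule conjunct2)
  have eq: "{x \<in> Omega_set n X x0. ?q x \<in> {A \<in> topspace (pi_top n X x0). ind n X x0 g A \<in> U}}
        = {x \<in> topspace (Omega_top n X x0). conc g x \<in> ?W}"
  proof (rule set_eqI)
    fix x
    show "x \<in> {x \<in> Omega_set n X x0. ?q x \<in> {A \<in> topspace (pi_top n X x0). ind n X x0 g A \<in> U}}
          \<longleftrightarrow> x \<in> {x \<in> topspace (Omega_top n X x0). conc g x \<in> ?W}"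
    proof (cases "x \<in> Omega_set n X x0")
      case True
      have "?q x \<in> topspace (pi_top n X x0)" unfolding topspace_pi using True by (rule imageI)
      then show ?thesis using ind_q[OF n g True] conc_Omega[OF n g True] True
        by (simp add: topspace_OT)
    next
      case False
      then show ?thesis by (simp add: topspace_OT)
    qed
  qed
  have "openin (Omega_top n X x0) {x \<in> topspace (Omega_top n X x0). conc g x \<in> ?W}"
    by (rule openin_continuous_map_preimage[OF cont_conc[OF n g] W])
  moreover have "{A \<in> topspace (pi_top n X x0). ind n X x0 g A \<in> U} \<subseteq> htp_class n X x0 ` Omega_set n X x0"
    unfolding topspace_pi by blast
  ultimately show "openin (pi_top n X x0) {A \<in> topspace (pi_top n X x0). ind n X x0 g A \<in> U}"
    unfolding openin_pi eq by blast
qed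

lemma homeo_ind:
  assumes n: "0 < n" and x0: "x0 \<in> topspace X" and g: "g \<in> Omega_set n X x0"
  shows "homeomorphic_map (pi_top n X x0) (pi_top n X x0) (ind n X x0 g)"
proof -
  have rg: "lrev g \<in> Omega_set n X x0" by (rule lrev_Omega[OF n g])
  have "homeomorphic_maps (pi_top n X x0) (pi_top n X x0) (ind n X x0 g) (ind n X x0 (lrev g))"
    unfolding homeomorphic_maps_def
  proof (intro conjI ballI cont_ind n g rg)
    fix A assume "A \<in> topspace (pi_top n X x0)"
    then obtain f where f: "f \<in> Omega_set n X x0" and A: "A = htp_class n X x0 f"
      by (auto simp: topspace_pi)
    have "ind n X x0 (lrev g) (ind n X x0 g A) = htp_class n X x0 (conc (lrev g) (conc g f))"
      unfolding A by (simp add: ind_q n g rg f conc_Omega)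
    also have "\<dots> = A" unfolding A
      by (rule iffD2[OF q_eq conc_inv[OF n x0 g f]]) (intro conc_Omega n rg g f)+
    finally show "ind n X x0 (lrev g) (ind n X x0 g A) = A" .
    have "ind n X x0 g (ind n X x0 (lrev g) A) = htp_class n X x0 (conc (lrev (lrev g)) (conc (lrev g) f))"
      unfolding A lrev_lrev by (simp add: ind_q n g rg f conc_Omega)
    also have "\<dots> = A" unfolding A
      by (rule iffD2[OF q_eq conc_inv[OF n x0 rg f]]) (simp_all add: lrev_lrev conc_Omega n rg g f)
    finally show "ind n X x0 g (ind n X x0 (lrev g) A) = A" .
  qed
  then show ?thesis by (rule homeomorphic_maps_imp_map)
qed

theorem proposition3p2:
  fixes X :: "'a topology" and x0 :: 'a and n :: nat
  assumes "x0 \<in> topspace X" and "n \<ge> 1"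
  shows "homogeneous_space (pi_top n X x0)"
  unfolding homogeneous_space_def
proof (intro ballI)
  have n: "0 < n" using assms(2) by simp
  have x0: "x0 \<in> topspace X" by (rule assms(1))
  let ?q = "htp_class n X x0"
  fix a b assume "a \<in> topspace (pi_top n X x0)" "b \<in> topspace (pi_top n X x0)"
  then obtain f0 g0 where f0: "f0 \<in> Omega_set n X x0" and a: "a = ?q f0"
    and g0: "g0 \<in> Omega_set n X x0" and b: "b = ?q g0"
    by (auto simp: topspace_pi)
  have rf: "lrev f0 \<in> Omega_set n X x0" by (rule lrev_Omega[OF n f0])
  have rg: "lrev g0 \<in> Omega_set n X x0" by (rule lrev_Omega[OF n g0])
  have c: "(\<lambda>t. x0) \<in> Omega_set n X x0" by (rule const_Omega[OF x0])
  let ?h = "ind n X x0 g0 \<circ> ind n X x0 (lrev f0)"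
  have hh: "homeomorphic_map (pi_top n X x0) (pi_top n X x0) ?h"
    by (rule homeomorphic_map_compose[OF homeo_ind[OF n x0 rf] homeo_ind[OF n x0 g0]])
  have e1: "?q (conc (lrev f0) f0) = ?q (\<lambda>t. x0)"
    by (rule iffD2[OF q_eq cancel[OF n f0]]) (intro conc_Omega n rf f0 c)+
  have e2: "?q (conc (lrev g0) g0) = ?q (\<lambda>t. x0)"
    by (rule iffD2[OF q_eq cancel[OF n g0]]) (intro conc_Omega n rg g0 c)+
  have e3: "?q (conc g0 (conc (lrev g0) g0)) = ?q g0"
    by (rule iffD2[OF q_eq conc_inv[OF n x0 rg g0, unfolded lrev_lrev]]) (intro conc_Omega n rg g0)+
  have "?h a = ind n X x0 g0 (?q (conc (lrev f0) f0))"
    unfolding a by (simp add: ind_q n rf f0)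
  also have "\<dots> = ind n X x0 g0 (?q (conc (lrev g0) g0))" by (simp only: e1 e2)
  also have "\<dots> = ?q (conc g0 (conc (lrev g0) g0))" by (simp add: ind_q n g0 rg conc_Omega)
  also have "\<dots> = b" unfolding b by (rule e3)
  finally show "\<exists>h. homeomorphic_map (pi_top n X x0) (pi_top n X x0) h \<and> h a = b"
    using hh by blast
qed

end
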